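(* Let $T,S\in\mathcal{B}_A(\mathcal{H})$. Then $$\omega_A(TS)\le \|T\|_A\,\omega_A(S)+\tfrac12\,\omega_A\big(TS+ST^{\sharp_A}\big)\quad\text{and}\quad \omega_A(TS)\le \|T\|_A\,\omega_A(S)+\tfrac12\,\omega_A\big(TS-ST^{\sharp_A}\big).$$
   Context: $\mathcal{H}$ is a complex Hilbert space with inner product $\langle\cdot,\cdot\rangle$, and $A$ is a fixed nonzero positive bounded operator on $\mathcal{H}$. Set $\langle x,y\rangle_A=\langle Ax,y\rangle$ and $\|x\|_A=\|A^{1/2}x\|$. $\mathcal{B}_A(\mathcal{H})$ is the set of bounded operators $T$ for which there exists a bounded $S$ with $\langle Tx,y\rangle_A=\langle x,Sy\rangle_A$ for all $x,y$ (equivalently $\mathcal{R}(T^*A)\subseteq\mathcal{R}(A)$). For $T\in\mathcal{B}_A(\mathcal{H})$, $T^{\sharp_A}$ denotes the reduced solution of $AX=T^*A$, i.e. $T^{\sharp_A}=A^\dagger T^*A$ ($A^\dagger$ the Moore–Penrose inverse). For an operator $T$ with $\|Tx\|_A\le\lambda\|x\|_A$ for some $\lambda>0$ and all $x$, $\|T\|_A=\sup\{\|Tx\|_A: \|x\|_A=1\}$, and $\omega_A(T)=\sup\{|\langle Tx,x\rangle_A|:\|x\|_A=1\}$ is the $A$-numerical radius. *)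

theory Defs
  imports "HOL-Analysis.Analysis"
begin

definition hnorm :: "('a \<Rightarrow> 'a \<Rightarrow> complex) \<Rightarrow> 'a \<Rightarrow> real" where
  "hnorm ip x = sqrt (Re (ip x x))"

locale complex_hilbert =
  fixes sc :: "complex \<Rightarrow> 'a::ab_group_add \<Rightarrow> 'a"
    and ip :: "'a \<Rightarrow> 'a \<Rightarrow> complex"
  assumes sc_add_right: "sc a (x + y) = sc a x + sc a y"
    and sc_add_left: "sc (a + b) x = sc a x + sc b x"
    and sc_assoc: "sc a (sc b x) = sc (a * b) x"
    and sc_one: "sc 1 x = x"
    and ip_conj_sym: "ip x y = cnj (ip y x)"
    and ip_add_left: "ip (x + y) z = ip x z + ip y z"
    and ip_sc_left: "ip (sc a x) y = a * ip x y"
    and ip_nonneg: "Im (ip x x) = 0 \<and> 0 \<le> Re (ip x x)"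
    and ip_definite: "ip x x = 0 \<Longrightarrow> x = 0"
    and complete: "(\<forall>e>0. \<exists>N. \<forall>m\<ge>N. \<forall>n\<ge>N. hnorm ip (f m - f n) < e)
                   \<Longrightarrow> \<exists>l. (\<lambda>n. hnorm ip (f n - l)) \<longlonglongrightarrow> 0"

definition bounded_op :: "(complex \<Rightarrow> 'a::ab_group_add \<Rightarrow> 'a) \<Rightarrow> ('a \<Rightarrow> 'a \<Rightarrow> complex)
    \<Rightarrow> ('a \<Rightarrow> 'a) \<Rightarrow> bool" where
  "bounded_op sc ip T \<longleftrightarrow>
     (\<forall>x y. T (x + y) = T x + T y) \<and> (\<forall>a x. T (sc a x) = sc a (T x)) \<and>
     (\<exists>K. \<forall>x. hnorm ip (T x) \<le> K * hnorm ip x)"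

definition positive_op :: "(complex \<Rightarrow> 'a::ab_group_add \<Rightarrow> 'a) \<Rightarrow> ('a \<Rightarrow> 'a \<Rightarrow> complex)
    \<Rightarrow> ('a \<Rightarrow> 'a) \<Rightarrow> bool" where
  "positive_op sc ip A \<longleftrightarrow> bounded_op sc ip A \<and>
     (\<forall>x. Im (ip (A x) x) = 0 \<and> 0 \<le> Re (ip (A x) x))"

definition BA :: "(complex \<Rightarrow> 'a::ab_group_add \<Rightarrow> 'a) \<Rightarrow> ('a \<Rightarrow> 'a \<Rightarrow> complex)
    \<Rightarrow> ('a \<Rightarrow> 'a) \<Rightarrow> ('a \<Rightarrow> 'a) set" where
  "BA sc ip A = {T. bounded_op sc ip T \<and>
      (\<exists>S. bounded_op sc ip S \<and> (\<forall>x y. ip (A (T x)) y = ip (A x) (S y)))}"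

text \<open>T^{sharp_A}: the reduced solution of A X = T^* A, i.e. the unique bounded X with
  A X = T^* A (equivalently ip (A (X x)) y = ip (A x) (T y) for all x y) and
  range of X contained in the closure of the range of A.\<close>
definition sharpA :: "(complex \<Rightarrow> 'a::ab_group_add \<Rightarrow> 'a) \<Rightarrow> ('a \<Rightarrow> 'a \<Rightarrow> complex)
    \<Rightarrow> ('a \<Rightarrow> 'a) \<Rightarrow> ('a \<Rightarrow> 'a) \<Rightarrow> ('a \<Rightarrow> 'a)" where
  "sharpA sc ip A T = (THE X. bounded_op sc ip X \<and>
      (\<forall>x y. ip (A (X x)) y = ip (A x) (T y)) \<and>
      (\<forall>x. \<forall>e>0. \<exists>u. hnorm ip (X x - A u) < e))"

definition normA :: "('a \<Rightarrow> 'a \<Rightarrow> complex) \<Rightarrow> ('a \<Rightarrow> 'a) \<Rightarrow> 'a \<Rightarrow> real" where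
  "normA ip A x = sqrt (Re (ip (A x) x))"

definition opnormA :: "('a \<Rightarrow> 'a \<Rightarrow> complex) \<Rightarrow> ('a \<Rightarrow> 'a) \<Rightarrow> ('a \<Rightarrow> 'a) \<Rightarrow> real" where
  "opnormA ip A T = Sup {normA ip A (T x) | x. normA ip A x = 1}"

definition numradA :: "('a \<Rightarrow> 'a \<Rightarrow> complex) \<Rightarrow> ('a \<Rightarrow> 'a) \<Rightarrow> ('a \<Rightarrow> 'a) \<Rightarrow> real" where
  "numradA ip A T = Sup {cmod (ip (A (T x)) x) | x. normA ip A x = 1}"

end

theory Submission
  imports Defs
begin


context complex_hilbert begin

lemma ip_add_right: "ip x (y + z) = ip x y + ip x z"
  by (metis ip_conj_sym ip_add_left complex_cnj_add)
lemma ip_sc_right: "ip x (sc a y) = cnj a * ip x y"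
  by (metis ip_conj_sym ip_sc_left complex_cnj_mult)
lemma ip_zero_left[simp]: "ip 0 y = 0"  using ip_add_left[of 0 0 y] by simp
lemma ip_zero_right[simp]: "ip x 0 = 0" using ip_add_right[of x 0 0] by simp
lemma ip_minus_left: "ip (-x) y = - ip x y"
  using ip_add_left[of x "-x" y] by (simp add: add_eq_0_iff)
lemma ip_minus_right: "ip x (-y) = - ip x y"
  using ip_add_right[of x y "-y"] by (simp add: add_eq_0_iff)
lemma ip_diff_left: "ip (x - y) z = ip x z - ip y z"
  by (simp only: diff_conv_add_uminus ip_add_left ip_minus_left)
lemma ip_diff_right: "ip x (y - z) = ip x y - ip x z"
  by (simp only: diff_conv_add_uminus ip_add_right ip_minus_right)
lemma sc_zero_right[simp]: "sc a 0 = 0" using sc_add_right[of a 0 0] by simp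
lemma sc_zero_left[simp]: "sc 0 x = 0" using sc_add_left[of 0 0 x] by simp
lemma sc_minus: "sc a (-x) = - sc a x"
  using sc_add_right[of a x "-x"] by (simp add: add_eq_0_iff)
lemma sc_diff_right: "sc a (x - y) = sc a x - sc a y"
  by (simp only: diff_conv_add_uminus sc_add_right sc_minus)
lemma sc_neg_one: "sc (-1) x = - x"
  using sc_add_left[of 1 "-1" x] by (simp add: sc_one add_eq_0_iff)
lemma ip_self_real: "ip x x = of_real (Re (ip x x))"
  using ip_nonneg[of x] by (simp add: complex_eq_iff)

end

lemma bop_add: "bounded_op sc ip T \<Longrightarrow> T (x + y) = T x + T y"
  by (simp add: bounded_op_def)
lemma bop_sc: "bounded_op sc ip T \<Longrightarrow> T (sc a x) = sc a (T x)"
  by (simp add: bounded_op_def)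
lemma bop_zero: "bounded_op sc ip T \<Longrightarrow> T 0 = 0"
  using bop_add[of sc ip T 0 0] by simp
lemma bop_minus: "bounded_op sc ip T \<Longrightarrow> T (- x) = - T x"
  using bop_add[of sc ip T x "-x"] bop_zero[of sc ip T] by (simp add: add_eq_0_iff)
lemma bop_diff: "bounded_op sc ip T \<Longrightarrow> T (x - y) = T x - T y"
  by (simp only: diff_conv_add_uminus bop_add bop_minus)
context complex_hilbert begin
lemma hnorm_ge0[simp]: "0 \<le> hnorm ip x" using ip_nonneg[of x] by (simp add: hnorm_def)
lemma bop_bound: "bounded_op sc ip T \<Longrightarrow> \<exists>K\<ge>1. \<forall>x. hnorm ip (T x) \<le> K * hnorm ip x"
proof -
  assume "bounded_op sc ip T"
  then obtain K where K: "\<forall>x. hnorm ip (T x) \<le> K * hnorm ip x" by (auto simp: bounded_op_def)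
  show ?thesis
  proof (intro exI[of _ "max K 1"] conjI allI)
    fix x
    have "0 \<le> hnorm ip x" by simp
    hence "K * hnorm ip x \<le> max K 1 * hnorm ip x" by (simp add: mult_right_mono)
    thus "hnorm ip (T x) \<le> max K 1 * hnorm ip x" using K by (meson order_trans)
  qed simp
qed
end



lemma quad_aux:
  fixes a b k :: real
  assumes "\<forall>t. 0 \<le> a - 2*t*k + t^2*k*b" "0 \<le> k" "0 \<le> b"
  shows "k \<le> a * b"
proof (cases "b = 0")
  case True
  show ?thesis
  proof (rule ccontr)
    assume "\<not> k \<le> a * b"
    hence "k > 0" using True by simp
    have "0 \<le> a - 2*((a+1)/(2*k))*k" using assms(1)[rule_format, of "(a+1)/(2*k)"] True by simp
    also have "\<dots> = -1" using \<open>k>0\<close> by (simp add: field_simps)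
    finally show False by simp
  qed
next
  case False
  hence bp: "b > 0" using assms(3) by simp
  have "0 \<le> a - 2*(1/b)*k + (1/b)^2*k*b" using assms(1) by blast
  also have "\<dots> = a - k / b" using bp by (simp add: field_simps power2_eq_square)
  finally have "k / b \<le> a" by simp
  thus ?thesis using bp by (simp add: field_simps mult.commute)
qed

context complex_hilbert begin

lemma pos_bop: "positive_op sc ip A \<Longrightarrow> bounded_op sc ip A"
  by (simp add: positive_op_def)
lemma pos_nonneg: "positive_op sc ip A \<Longrightarrow> 0 \<le> Re (ip (A x) x)"
  by (simp add: positive_op_def)
lemma pos_im: "positive_op sc ip A \<Longrightarrow> Im (ip (A x) x) = 0"
  by (simp add: positive_op_def)
lemma pos_real: "positive_op sc ip A \<Longrightarrow> ip (A x) x = of_real (Re (ip (A x) x))"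
  using pos_im[of A x] by (simp add: complex_eq_iff)

lemma expand:
  assumes "bounded_op sc ip A"
  shows "ip (A (x + sc z y)) (x + sc z y) = ip (A x) x + cnj z * ip (A x) y + z * ip (A y) x
           + z * cnj z * ip (A y) y"
  using assms by (simp add: bop_add bop_sc ip_add_left ip_add_right ip_sc_left ip_sc_right algebra_simps)

lemma pos_selfadj:
  assumes P: "positive_op sc ip A"
  shows "ip (A x) y = ip x (A y)"
proof -
  have B: "bounded_op sc ip A" using P by (rule pos_bop)
  define a where "a = ip (A x) y"
  define b where "b = ip (A y) x"
  have 1: "Im (ip (A (x + sc 1 y)) (x + sc 1 y)) = 0" using pos_im[OF P] by blast
  have 2: "Im (ip (A (x + sc \<i> y)) (x + sc \<i> y)) = 0" using pos_im[OF P] by blast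
  have ix: "Im (ip (A x) x) = 0" "Im (ip (A y) y) = 0" using pos_im[OF P] by auto
  from 1 have "Im a + Im b = 0" unfolding expand[OF B] a_def b_def using ix by simp
  moreover from 2 have "- Re a + Re b = 0" unfolding expand[OF B] a_def b_def using ix by simp
  ultimately have "b = cnj a" by (simp add: complex_eq_iff)
  hence "ip x (A y) = a" by (metis b_def ip_conj_sym complex_cnj_cnj)
  thus ?thesis by (simp add: a_def)
qed

lemma pos_herm:
  assumes P: "positive_op sc ip A"
  shows "ip (A y) x = cnj (ip (A x) y)"
  by (metis P pos_selfadj ip_conj_sym)

lemma pos_cs:
  assumes P: "positive_op sc ip A"
  shows "(cmod (ip (A x) y))^2 \<le> Re (ip (A x) x) * Re (ip (A y) y)"
proof -
  have B: "bounded_op sc ip A" using P by (rule pos_bop)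
  define c where "c = ip (A x) y"
  define k where "k = (cmod c)^2"
  have cc1: "c * cnj c = of_real k" unfolding k_def
    by (rule complex_norm_square[symmetric])
  have cc: "c * cnj c = of_real k" "cnj c * c = of_real k" using cc1 by (simp_all add: mult.commute)
  have "\<forall>t. 0 \<le> Re (ip (A x) x) - 2*t*k + t^2*k*Re (ip (A y) y)"
  proof
    fix t :: real
    have "0 \<le> Re (ip (A (x + sc (- (of_real t * c)) y)) (x + sc (- (of_real t * c)) y))"
      by (rule pos_nonneg[OF P])
    also have "ip (A (x + sc (- (of_real t * c)) y)) (x + sc (- (of_real t * c)) y)
       = ip (A x) x - of_real t * (cnj c * c) - of_real t * (c * cnj c)
         + of_real (t^2) * (c * cnj c) * ip (A y) y"
      unfolding expand[OF B] pos_herm[OF P, of y x] c_def[symmetric]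
      by (simp add: algebra_simps power2_eq_square)
    also have "\<dots> = ip (A x) x - of_real (2*t*k) + of_real (t^2*k) * ip (A y) y"
      unfolding cc by (simp add: algebra_simps)
    finally show "0 \<le> Re (ip (A x) x) - 2*t*k + t^2*k*Re (ip (A y) y)" by simp
  qed
  moreover have "0 \<le> k" by (simp add: k_def)
  ultimately have "k \<le> Re (ip (A x) x) * Re (ip (A y) y)"
    using quad_aux pos_nonneg[OF P] by blast
  thus ?thesis by (simp add: k_def c_def)
qed

lemma normA_ge0[simp]: "positive_op sc ip A \<Longrightarrow> 0 \<le> normA ip A x"
  by (simp add: normA_def pos_nonneg)
lemma normA_sq: "positive_op sc ip A \<Longrightarrow> (normA ip A x)^2 = Re (ip (A x) x)"
  by (simp add: normA_def pos_nonneg)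

lemma normA_cs:
  assumes P: "positive_op sc ip A"
  shows "cmod (ip (A x) y) \<le> normA ip A x * normA ip A y"
proof -
  have "(cmod (ip (A x) y))^2 \<le> (normA ip A x * normA ip A y)^2"
    using pos_cs[OF P, of x y] by (simp add: power_mult_distrib normA_sq[OF P])
  thus ?thesis using P by (simp add: power2_le_iff_abs_le)
qed

lemma normA_sc:
  assumes P: "positive_op sc ip A"
  shows "normA ip A (sc a x) = cmod a * normA ip A x"
proof -
  have B: "bounded_op sc ip A" using P by (rule pos_bop)
  have "ip (A (sc a x)) (sc a x) = a * cnj a * ip (A x) x"
    by (simp add: bop_sc[OF B] ip_sc_left ip_sc_right)
  hence "ip (A (sc a x)) (sc a x) = of_real ((cmod a)^2) * ip (A x) x"
    by (simp only: complex_norm_square)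
  hence "Re (ip (A (sc a x)) (sc a x)) = (cmod a)^2 * Re (ip (A x) x)" by simp
  hence "(normA ip A (sc a x))^2 = (cmod a * normA ip A x)^2"
    by (simp add: normA_sq[OF P] power_mult_distrib)
  thus ?thesis using P by (simp add: power2_eq_iff_nonneg)
qed

lemma normA_triangle:
  assumes P: "positive_op sc ip A"
  shows "normA ip A (x + y) \<le> normA ip A x + normA ip A y"
proof -
  have B: "bounded_op sc ip A" using P by (rule pos_bop)
  have e: "ip (A (x + y)) (x + y) = ip (A x) x + ip (A x) y + ip (A y) x + ip (A y) y"
    using expand[OF B, of x 1 y] by (simp add: sc_one)
  have "Re (ip (A x) y) \<le> normA ip A x * normA ip A y"
    using normA_cs[OF P, of x y] complex_Re_le_cmod order_trans by blast
  moreover have "Re (ip (A y) x) \<le> normA ip A x * normA ip A y"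
    using normA_cs[OF P, of y x] complex_Re_le_cmod order_trans by (metis mult.commute)
  ultimately have "(normA ip A (x + y))^2 \<le> (normA ip A x + normA ip A y)^2"
    unfolding normA_sq[OF P] e by (simp add: power2_sum normA_sq[OF P])
  thus ?thesis using P by (meson add_nonneg_nonneg normA_ge0 power2_le_imp_le)
qed

lemma normA_minus:
  assumes P: "positive_op sc ip A"
  shows "normA ip A (- x) = normA ip A x"
  using normA_sc[OF P, of "-1" x] by (simp add: sc_neg_one)

lemma normA_zero_cs:
  assumes P: "positive_op sc ip A" "normA ip A x = 0"
  shows "ip (A x) y = 0" "ip (A y) x = 0"
  using normA_cs[OF P(1), of x y] normA_cs[OF P(1), of y x] normA_ge0[OF P(1)] P(2)
  by (auto simp: mult_le_0_iff)

lemma id_pos: "positive_op sc ip id"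
  unfolding positive_op_def bounded_op_def using ip_nonneg by (auto intro: exI[of _ 1])
lemma bop_id: "bounded_op sc ip id"
  using id_pos by (simp add: positive_op_def)
lemma hnorm_normA: "hnorm ip x = normA ip id x"
  by (simp add: hnorm_def normA_def)

end


context complex_hilbert begin

lemma nA_le_hnorm:
  assumes P: "positive_op sc ip A"
  shows "\<exists>C\<ge>0. \<forall>v. normA ip A v \<le> C * hnorm ip v"
proof -
  obtain KA where KA: "KA \<ge> 1" "\<forall>x. hnorm ip (A x) \<le> KA * hnorm ip x"
    using bop_bound[OF pos_bop[OF P]] by blast
  show ?thesis
  proof (intro exI[of _ "sqrt KA"] conjI allI)
    fix v
    have "(normA ip A v)^2 = Re (ip (A v) v)" by (rule normA_sq[OF P])
    also have "\<dots> \<le> cmod (ip (id (A v)) v)" by (simp add: complex_Re_le_cmod)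
    also have "\<dots> \<le> hnorm ip (A v) * hnorm ip v" using normA_cs[OF id_pos] by (simp add: hnorm_normA)
    also have "\<dots> \<le> KA * hnorm ip v * hnorm ip v" using KA by (simp add: mult_right_mono)
    also have "\<dots> = (sqrt KA * hnorm ip v)^2" using KA by (simp add: power_mult_distrib power2_eq_square)
    finally show "normA ip A v \<le> sqrt KA * hnorm ip v"
      by (rule power2_le_imp_le) (use KA in simp)
  qed (use KA in simp)
qed

lemma selfadj_Abound:
  assumes P: "positive_op sc ip A" and BP: "bounded_op sc ip Q"
    and SA: "\<forall>x y. ip (A (Q x)) y = ip (A x) (Q y)"
  shows "\<exists>K\<ge>1. \<forall>x. normA ip A (Q x) \<le> K * normA ip A x"
proof -
  obtain K where K: "K \<ge> 1" "\<forall>x. hnorm ip (Q x) \<le> K * hnorm ip x"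
    using bop_bound[OF BP] by blast
  obtain C where C: "C \<ge> 0" "\<forall>v. normA ip A v \<le> C * hnorm ip v"
    using nA_le_hnorm[OF P] by blast
  have hp: "hnorm ip ((Q^^k) x) \<le> K^k * hnorm ip x" for k x
  proof (induction k)
    case 0 then show ?case by simp
  next
    case (Suc k)
    have "hnorm ip ((Q^^Suc k) x) \<le> K * hnorm ip ((Q^^k) x)" using K by simp
    also have "\<dots> \<le> K * (K^k * hnorm ip x)" using Suc K by (simp add: mult_left_mono)
    finally show ?case by (simp add: mult.assoc)
  qed
  show ?thesis
  proof (intro exI[of _ K] conjI allI)
    fix x
    define N where "N k = normA ip A ((Q^^k) x)" for k
    have N0: "N k \<ge> 0" for k using P by (simp add: N_def)
    have lc: "(N (Suc k))^2 \<le> N k * N (Suc (Suc k))" for k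
    proof -
      have "(N (Suc k))^2 = Re (ip (A (Q ((Q^^k) x))) (Q ((Q^^k) x)))"
        by (simp add: N_def normA_sq[OF P])
      also have "\<dots> = Re (ip (A ((Q^^k) x)) (Q (Q ((Q^^k) x))))" using SA by simp
      also have "\<dots> \<le> cmod (ip (A ((Q^^k) x)) (Q (Q ((Q^^k) x))))" by (rule complex_Re_le_cmod)
      also have "\<dots> \<le> N k * N (Suc (Suc k))" using normA_cs[OF P] by (simp add: N_def)
      finally show ?thesis .
    qed
    have Qk: "N 1 * N k \<le> N (Suc k) * N 0" for k
    proof (induction k)
      case 0 then show ?case by (simp add: mult.commute)
    next
      case (Suc k)
      show ?case
      proof (cases "N k = 0")
        case True
        hence "(N (Suc k))^2 \<le> 0" using lc[of k] by simp
        hence "N (Suc k) = 0" by simp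
        thus ?thesis using N0 by simp
      next
        case False
        hence pos: "N k > 0" using N0[of k] by simp
        have "N k * (N 1 * N (Suc k)) = N (Suc k) * (N 1 * N k)" by (simp add: algebra_simps)
        also have "\<dots> \<le> N (Suc k) * (N (Suc k) * N 0)" using Suc N0 by (simp add: mult_left_mono)
        also have "\<dots> = (N (Suc k))^2 * N 0" by (simp add: power2_eq_square algebra_simps)
        also have "\<dots> \<le> N k * N (Suc (Suc k)) * N 0" using lc[of k] N0 by (simp add: mult_right_mono)
        finally have "N k * (N 1 * N (Suc k)) \<le> N k * (N (Suc (Suc k)) * N 0)"
          by (simp add: algebra_simps)
        thus ?thesis using pos by simp
      qed
    qed
    show "normA ip A (Q x) \<le> K * normA ip A x"
    proof (cases "N 0 = 0")
      case True
      hence "(N 1)^2 \<le> 0" using lc[of 0] by simp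
      hence "N 1 = 0" by simp
      thus ?thesis using True by (simp add: N_def)
    next
      case False
      hence pos: "N 0 > 0" using N0[of 0] by simp
      define r where "r = N 1 / N 0"
      have r0: "r \<ge> 0" using N0 pos by (simp add: r_def)
      have grow: "r^k * N 0 \<le> N k" for k
      proof (induction k)
        case 0 then show ?case by simp
      next
        case (Suc k)
        have "r * N k \<le> N (Suc k)" using Qk[of k] pos by (simp add: r_def field_simps)
        moreover have "r * (r^k * N 0) \<le> r * N k" using Suc r0 by (simp add: mult_left_mono)
        ultimately show ?case by simp
      qed
      have "r \<le> K"
      proof (rule ccontr)
        assume "\<not> r \<le> K"
        hence "1 < r / K" using K by simp
        then obtain n where n: "C * hnorm ip x / N 0 < (r/K)^n" using real_arch_pow by blast
        have "r^n * N 0 \<le> C * (K^n * hnorm ip x)"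
          using grow[of n] C hp[of n x] by (metis N_def mult_left_mono order_trans)
        hence "(r/K)^n * N 0 \<le> C * hnorm ip x" using K
          by (simp add: power_divide field_simps)
        hence "(r/K)^n \<le> C * hnorm ip x / N 0" using pos by (simp add: field_simps)
        thus False using n by simp
      qed
      hence "N 1 \<le> K * N 0" using pos by (simp add: r_def field_simps)
      thus ?thesis by (simp add: N_def)
    qed
  qed (use K in simp)
qed

lemma adj_swap:
  assumes P: "positive_op sc ip A" and R: "\<forall>x y. ip (A (T x)) y = ip (A x) (R y)"
  shows "ip (A (R x)) y = ip (A x) (T y)"
proof -
  have "ip (A (R x)) y = cnj (ip (A y) (R x))" by (rule pos_herm[OF P])
  also have "\<dots> = cnj (ip (A (T y)) x)" using R by simp
  also have "\<dots> = ip (A x) (T y)" using pos_herm[OF P, of x "T y"] by simp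
  finally show ?thesis .
qed

lemma bop_comp:
  assumes "bounded_op sc ip R" "bounded_op sc ip T"
  shows "bounded_op sc ip (\<lambda>x. R (T x))"
proof -
  obtain K1 where K1: "K1 \<ge> 1" "\<forall>x. hnorm ip (R x) \<le> K1 * hnorm ip x" using bop_bound[OF assms(1)] by blast
  obtain K2 where K2: "K2 \<ge> 1" "\<forall>x. hnorm ip (T x) \<le> K2 * hnorm ip x" using bop_bound[OF assms(2)] by blast
  have "hnorm ip (R (T x)) \<le> (K1 * K2) * hnorm ip x" for x
  proof -
    have "hnorm ip (R (T x)) \<le> K1 * hnorm ip (T x)" using K1 by simp
    also have "\<dots> \<le> K1 * (K2 * hnorm ip x)" using K1 K2 by (simp add: mult_left_mono)
    finally show ?thesis by (simp add: mult.assoc)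
  qed
  thus ?thesis using assms unfolding bounded_op_def by auto
qed

lemma BA_Abound:
  assumes P: "positive_op sc ip A" and T: "T \<in> BA sc ip A"
  shows "\<exists>C\<ge>0. \<forall>x. normA ip A (T x) \<le> C * normA ip A x"
proof -
  obtain R where R: "bounded_op sc ip R" "\<forall>x y. ip (A (T x)) y = ip (A x) (R y)"
    using T by (auto simp: BA_def)
  have BT: "bounded_op sc ip T" using T by (simp add: BA_def)
  have SA: "\<forall>x y. ip (A (R (T x))) y = ip (A x) (R (T y))"
    using adj_swap[OF P R(2)] R(2) by simp
  obtain K where K: "K \<ge> 1" "\<forall>x. normA ip A (R (T x)) \<le> K * normA ip A x"
    using selfadj_Abound[OF P bop_comp[OF R(1) BT] SA] by blast
  show ?thesis
  proof (intro exI[of _ "sqrt K"] conjI allI)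
    fix x
    have "(normA ip A (T x))^2 = Re (ip (A (T x)) (T x))" by (rule normA_sq[OF P])
    also have "\<dots> = Re (ip (A x) (R (T x)))" using R by simp
    also have "\<dots> \<le> cmod (ip (A x) (R (T x)))" by (rule complex_Re_le_cmod)
    also have "\<dots> \<le> normA ip A x * normA ip A (R (T x))" by (rule normA_cs[OF P])
    also have "\<dots> \<le> normA ip A x * (K * normA ip A x)" using K P by (simp add: mult_left_mono)
    also have "\<dots> = (sqrt K * normA ip A x)^2" using K by (simp add: power_mult_distrib power2_eq_square)
    finally show "normA ip A (T x) \<le> sqrt K * normA ip A x"
      by (rule power2_le_imp_le) (use K P in simp)
  qed (use K in simp)
qed

end


definition rclos :: "('a::ab_group_add \<Rightarrow> 'a \<Rightarrow> complex) \<Rightarrow> ('a \<Rightarrow> 'a) \<Rightarrow> 'a set" where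
  "rclos ip A = {z. \<forall>e>0. \<exists>u. hnorm ip (z - A u) < e}"

lemma quad2_aux:
  fixes b c :: real
  assumes "\<forall>t. 0 \<le> 2*t*c + t^2*b" "0 \<le> b"
  shows "c = 0"
proof (rule ccontr)
  assume c: "c \<noteq> 0"
  have bp: "b + 1 > 0" using assms(2) by simp
  have "0 \<le> 2*(-c/(b+1))*c + (-c/(b+1))^2*b" using assms(1) by blast
  also have "\<dots> = c^2 * (-b - 2) / (b+1)^2" using bp
    by (simp add: divide_simps power2_eq_square) (simp add: algebra_simps)
  also have "\<dots> < 0" using c assms(2)
    by (intro divide_neg_pos mult_pos_neg) auto
  finally show False by simp
qed

context complex_hilbert begin

lemma hnorm_triangle: "hnorm ip (x + y) \<le> hnorm ip x + hnorm ip y"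
  using normA_triangle[OF id_pos] by (simp add: hnorm_normA)
lemma hnorm_sc: "hnorm ip (sc a x) = cmod a * hnorm ip x"
  using normA_sc[OF id_pos] by (simp add: hnorm_normA)
lemma hnorm_sq: "(hnorm ip x)^2 = Re (ip x x)"
  using normA_sq[OF id_pos] by (simp add: hnorm_normA)
lemma hnorm_minus: "hnorm ip (- x) = hnorm ip x"
  using normA_minus[OF id_pos] by (simp add: hnorm_normA)
lemma hnorm_commute: "hnorm ip (x - y) = hnorm ip (y - x)"
  using hnorm_minus[of "x - y"] by simp
lemma hnorm_eq0: "hnorm ip x = 0 \<Longrightarrow> x = 0"
proof -
  assume "hnorm ip x = 0"
  hence "Re (ip x x) = 0" using hnorm_sq[of x] by simp
  hence "ip x x = 0" using ip_self_real[of x] by simp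
  thus "x = 0" by (rule ip_definite)
qed
lemma hnorm_zero[simp]: "hnorm ip 0 = 0" by (simp add: hnorm_def)
lemma hnorm_cs: "cmod (ip x y) \<le> hnorm ip x * hnorm ip y"
  using normA_cs[OF id_pos] by (simp add: hnorm_normA)

lemma parallelogram:
  "(hnorm ip (a + b))^2 + (hnorm ip (a - b))^2 = 2 * (hnorm ip a)^2 + 2 * (hnorm ip b)^2"
  unfolding hnorm_sq by (simp add: ip_add_left ip_add_right ip_diff_left ip_diff_right)

lemma rclos_A: "A u \<in> rclos ip A"
  unfolding rclos_def by (auto intro!: exI[of _ u])

lemma rclos_add:
  assumes B: "bounded_op sc ip A" and z: "z1 \<in> rclos ip A" "z2 \<in> rclos ip A"
  shows "z1 + z2 \<in> rclos ip A"
  unfolding rclos_def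
proof (intro CollectI allI impI)
  fix e :: real assume e: "e > 0"
  have he: "e/2 > 0" using e by simp
  obtain u1 where u1: "hnorm ip (z1 - A u1) < e/2" using z(1) he unfolding rclos_def by blast
  obtain u2 where u2: "hnorm ip (z2 - A u2) < e/2" using z(2) he unfolding rclos_def by blast
  have "z1 + z2 - A (u1 + u2) = (z1 - A u1) + (z2 - A u2)" using B by (simp add: bop_add algebra_simps)
  hence "hnorm ip (z1 + z2 - A (u1 + u2)) \<le> hnorm ip (z1 - A u1) + hnorm ip (z2 - A u2)"
    using hnorm_triangle by metis
  thus "\<exists>u. hnorm ip (z1 + z2 - A u) < e" using u1 u2 by (intro exI[of _ "u1+u2"]) simp
qed

lemma rclos_sc:
  assumes B: "bounded_op sc ip A" and z: "z \<in> rclos ip A"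
  shows "sc a z \<in> rclos ip A"
  unfolding rclos_def
proof (intro CollectI allI impI)
  fix e :: real assume e: "e > 0"
  have "e / (cmod a + 1) > 0" using e by (simp add: add_nonneg_pos)
  then obtain u where u: "hnorm ip (z - A u) < e / (cmod a + 1)" using z unfolding rclos_def by blast
  have "sc a z - A (sc a u) = sc a (z - A u)" using B by (simp add: bop_sc sc_diff_right)
  hence "hnorm ip (sc a z - A (sc a u)) = cmod a * hnorm ip (z - A u)" by (simp add: hnorm_sc)
  also have "\<dots> \<le> (cmod a + 1) * hnorm ip (z - A u)" by (simp add: mult_right_mono)
  also have "\<dots> < e" using u by (simp add: pos_less_divide_eq add_nonneg_pos mult.commute)
  finally show "\<exists>u. hnorm ip (sc a z - A u) < e" by blast
qed

lemma rclos_diff: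
  assumes B: "bounded_op sc ip A" and z: "z1 \<in> rclos ip A" "z2 \<in> rclos ip A"
  shows "z1 - z2 \<in> rclos ip A"
  using rclos_add[OF B z(1) rclos_sc[OF B z(2), of "-1"]] by (simp add: sc_neg_one)

lemma rclos_zero:
  assumes B: "bounded_op sc ip A"
  shows "0 \<in> rclos ip A"
  using rclos_A[of A 0] bop_zero[OF B] by simp

lemma rclos_closed:
  assumes f: "\<forall>n. f n \<in> rclos ip A" and l: "(\<lambda>n. hnorm ip (f n - l)) \<longlonglongrightarrow> 0"
  shows "l \<in> rclos ip A"
  unfolding rclos_def
proof (intro CollectI allI impI)
  fix e :: real assume e: "e > 0"
  have he: "e/2 > 0" using e by simp
  have he: "e/2 > 0" using e by simp
  obtain n where n: "hnorm ip (f n - l) < e/2"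
    using l he unfolding lim_sequentially dist_real_def by fastforce
  obtain u where u: "hnorm ip (f n - A u) < e/2" using f he unfolding rclos_def by blast
  have "l - A u = (l - f n) + (f n - A u)" by simp
  hence "hnorm ip (l - A u) \<le> hnorm ip (l - f n) + hnorm ip (f n - A u)" using hnorm_triangle by metis
  moreover have "hnorm ip (l - f n) = hnorm ip (f n - l)" by (rule hnorm_commute)
  ultimately show "\<exists>u. hnorm ip (l - A u) < e" using n u by (intro exI[of _ u]) simp
qed

end


context complex_hilbert begin

lemma proj_ex:
  assumes B: "bounded_op sc ip A"
  shows "\<exists>l\<in>rclos ip A. \<forall>m\<in>rclos ip A. ip (y - l) m = 0"
proof -
  let ?M = "rclos ip A"
  define D where "D = (\<lambda>m. hnorm ip (y - m)) ` ?M"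
  define d where "d = Inf D"
  have Dne: "D \<noteq> {}" using rclos_zero[OF B] by (auto simp: D_def)
  have Dbdd: "bdd_below D" by (auto simp: D_def intro!: bdd_belowI[of _ 0])
  have dle: "d \<le> hnorm ip (y - m)" if "m \<in> ?M" for m
    unfolding d_def using that Dbdd by (auto simp: D_def intro!: cInf_lower)
  have d0: "0 \<le> d" unfolding d_def using Dne by (auto intro!: cInf_greatest simp: D_def)
  define ep where "ep n = inverse (real (Suc n))" for n
  have ep0: "ep n > 0" for n by (simp add: ep_def)
  have approx: "\<exists>m\<in>?M. (hnorm ip (y - m))^2 < d^2 + ep n" for n
  proof -
    have "sqrt (d^2) < sqrt (d^2 + ep n)" using ep0[of n] by (intro real_sqrt_less_mono) simp
    hence "d < sqrt (d^2 + ep n)" using d0 by simp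
    then obtain x where "x \<in> D" "x < sqrt (d^2 + ep n)" using cInf_lessD[OF Dne] d_def by blast
    then obtain m where m: "m \<in> ?M" "hnorm ip (y - m) < sqrt (d^2 + ep n)" by (auto simp: D_def)
    then have "(hnorm ip (y - m))^2 < (sqrt (d^2 + ep n))^2" by (intro power_strict_mono) auto
    also have "\<dots> = d^2 + ep n" using ep0[of n] by (simp add: add_nonneg_pos less_imp_le)
    finally show ?thesis using m by blast
  qed
  then obtain f where f: "\<forall>n. f n \<in> ?M \<and> (hnorm ip (y - f n))^2 < d^2 + ep n" by metis
  have two: "sc 2 v = v + v" for v using sc_add_left[of 1 1 v] by (simp add: sc_one)
  have cb: "(hnorm ip (f m - f n))^2 \<le> 2*ep m + 2*ep n" for m n
  proof -
    define mid where "mid = sc (1/2) (f m + f n)"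
    have midM: "mid \<in> ?M" unfolding mid_def using rclos_sc[OF B] rclos_add[OF B] f by blast
    have "sc 2 mid = f m + f n" by (simp add: mid_def sc_assoc sc_one)
    hence "(y - f m) + (y - f n) = sc 2 (y - mid)"
      by (simp add: sc_diff_right two algebra_simps)
    hence h1: "(hnorm ip ((y - f m) + (y - f n)))^2 = 4 * (hnorm ip (y - mid))^2"
      by (simp add: hnorm_sc power_mult_distrib)
    have h2: "(y - f m) - (y - f n) = f n - f m" by simp
    have par: "(hnorm ip ((y - f m) + (y - f n)))^2 + (hnorm ip (f n - f m))^2
        = 2 * (hnorm ip (y - f m))^2 + 2 * (hnorm ip (y - f n))^2"
      using parallelogram[of "y - f m" "y - f n"] unfolding h2 .
    have "d^2 \<le> (hnorm ip (y - mid))^2" using dle[OF midM] d0 by (simp add: power_mono)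
    moreover have "(hnorm ip (y - f m))^2 < d^2 + ep m" "(hnorm ip (y - f n))^2 < d^2 + ep n"
      using f by auto
    ultimately have "(hnorm ip (f n - f m))^2 \<le> 2*ep m + 2*ep n" using par h1 by linarith
    thus ?thesis by (simp add: hnorm_commute)
  qed
  have "\<exists>l. (\<lambda>n. hnorm ip (f n - l)) \<longlonglongrightarrow> 0"
  proof (rule complete, intro allI impI)
    fix e :: real assume e: "e > 0"
    hence e4: "e^2/4 > 0" by simp
    obtain N where N: "inverse (real (Suc N)) < e^2/4" using reals_Archimedean[OF e4] by blast
    show "\<exists>N. \<forall>m\<ge>N. \<forall>n\<ge>N. hnorm ip (f m - f n) < e"
    proof (intro exI[of _ N] allI impI)
      fix m n assume mn: "m \<ge> N" "n \<ge> N"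
      have "ep m \<le> ep N" "ep n \<le> ep N" unfolding ep_def using mn by (intro le_imp_inverse_le; simp)+
      moreover have "ep N < e^2/4" using N by (simp add: ep_def)
      ultimately have "2*ep m + 2*ep n < e^2" by linarith
      hence sq: "(hnorm ip (f m - f n))^2 < e^2" using cb[of m n] by linarith
      show "hnorm ip (f m - f n) < e" using power_less_imp_less_base[OF sq] e by simp
    qed
  qed
  then obtain l where l: "(\<lambda>n. hnorm ip (f n - l)) \<longlonglongrightarrow> 0" by blast
  have lM: "l \<in> ?M" using rclos_closed[of f A l] f l by blast
  have hl: "hnorm ip (y - l) \<le> d"
  proof -
    have epl: "ep \<longlonglongrightarrow> 0" unfolding ep_def by (rule LIMSEQ_inverse_real_of_nat)
    have lim: "(\<lambda>n. sqrt (d^2 + ep n) + hnorm ip (f n - l)) \<longlonglongrightarrow> sqrt (d^2 + 0) + 0"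
      by (intro tendsto_intros l epl)
    have "\<forall>n. hnorm ip (y - l) \<le> sqrt (d^2 + ep n) + hnorm ip (f n - l)"
    proof
      fix n
      have "y - l = (y - f n) + (f n - l)" by simp
      hence "hnorm ip (y - l) \<le> hnorm ip (y - f n) + hnorm ip (f n - l)" by (metis hnorm_triangle)
      moreover have "hnorm ip (y - f n) \<le> sqrt (d^2 + ep n)"
        using f by (intro real_le_rsqrt) (simp add: less_imp_le)
      ultimately show "hnorm ip (y - l) \<le> sqrt (d^2 + ep n) + hnorm ip (f n - l)" by simp
    qed
    hence "hnorm ip (y - l) \<le> sqrt (d^2 + 0) + 0" by (intro LIMSEQ_le_const[OF lim]) auto
    thus ?thesis using d0 by simp
  qed
  have opt: "hnorm ip (y - l) \<le> hnorm ip (y - l + w)" if "w \<in> ?M" for w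
  proof -
    have "l - w \<in> ?M" using rclos_diff[OF B lM that] .
    hence "d \<le> hnorm ip (y - (l - w))" by (rule dle)
    moreover have "y - (l - w) = y - l + w" by simp
    ultimately show ?thesis using hl by simp
  qed
  define v where "v = y - l"
  have key: "Re (ip v m') = 0" if mM: "m' \<in> ?M" for m'
  proof -
    have "\<forall>t. 0 \<le> 2*t*Re (ip v m') + t^2 * Re (ip m' m')"
    proof
      fix t :: real
      have "sc (of_real t) m' \<in> ?M" using rclos_sc[OF B mM] .
      hence "(hnorm ip v)^2 \<le> (hnorm ip (v + sc (of_real t) m'))^2"
        using opt by (simp add: v_def power_mono)
      also have "(hnorm ip (v + sc (of_real t) m'))^2
         = Re (ip v v) + t * Re (ip v m') + t * Re (ip m' v) + t^2 * Re (ip m' m')"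
        unfolding hnorm_sq using expand[OF bop_id, of v "of_real t" m'] 
        by (simp add: power2_eq_square)
      also have "Re (ip m' v) = Re (ip v m')" by (subst ip_conj_sym) simp
      finally show "0 \<le> 2*t*Re (ip v m') + t^2 * Re (ip m' m')" by (simp add: hnorm_sq)
    qed
    moreover have "0 \<le> Re (ip m' m')" using ip_nonneg by simp
    ultimately show ?thesis by (rule quad2_aux)
  qed
  show ?thesis
  proof (intro bexI[OF _ lM] ballI)
    fix m assume mM: "m \<in> ?M"
    have "Re (ip v m) = 0" using key[OF mM] .
    moreover have "Re (ip v (sc \<i> m)) = 0" using key[OF rclos_sc[OF B mM]] .
    hence "Im (ip v m) = 0" by (simp add: ip_sc_right)
    ultimately show "ip (y - l) m = 0" by (simp add: v_def complex_eq_iff)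
  qed
qed

end


definition projA :: "('a::ab_group_add \<Rightarrow> 'a \<Rightarrow> complex) \<Rightarrow> ('a \<Rightarrow> 'a) \<Rightarrow> 'a \<Rightarrow> 'a" where
  "projA ip A y = (SOME l. l \<in> rclos ip A \<and> (\<forall>m\<in>rclos ip A. ip (y - l) m = 0))"

context complex_hilbert begin

lemma proj_prop:
  assumes B: "bounded_op sc ip A"
  shows "projA ip A y \<in> rclos ip A" "\<forall>m\<in>rclos ip A. ip (y - projA ip A y) m = 0"
proof -
  have "\<exists>l. l \<in> rclos ip A \<and> (\<forall>m\<in>rclos ip A. ip (y - l) m = 0)" using proj_ex[OF B] by blast
  hence "projA ip A y \<in> rclos ip A \<and> (\<forall>m\<in>rclos ip A. ip (y - projA ip A y) m = 0)"
    unfolding projA_def by (rule someI_ex)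
  thus "projA ip A y \<in> rclos ip A" "\<forall>m\<in>rclos ip A. ip (y - projA ip A y) m = 0" by auto
qed

lemma proj_unique:
  assumes B: "bounded_op sc ip A"
    and l: "l \<in> rclos ip A" "\<forall>m\<in>rclos ip A. ip (y - l) m = 0"
  shows "projA ip A y = l"
proof -
  let ?p = "projA ip A y"
  have dM: "?p - l \<in> rclos ip A" using rclos_diff[OF B proj_prop(1)[OF B] l(1)] .
  have "ip (?p - l) (?p - l) = ip (y - l) (?p - l) - ip (y - ?p) (?p - l)"
    by (metis ip_diff_left diff_diff_eq2 add_diff_cancel_left' diff_add_cancel diff_diff_add add.commute)
  also have "\<dots> = 0" using l(2) proj_prop(2)[OF B] dM by simp
  finally have "?p - l = 0" by (rule ip_definite)
  thus ?thesis by simp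
qed

lemma proj_bop:
  assumes B: "bounded_op sc ip A"
  shows "bounded_op sc ip (projA ip A)"
proof -
  have add: "projA ip A (x + y) = projA ip A x + projA ip A y" for x y
  proof (rule proj_unique[OF B])
    show "projA ip A x + projA ip A y \<in> rclos ip A" using rclos_add[OF B] proj_prop(1)[OF B] by blast
    show "\<forall>m\<in>rclos ip A. ip (x + y - (projA ip A x + projA ip A y)) m = 0"
    proof
      fix m assume m: "m \<in> rclos ip A"
      have e: "x + y - (projA ip A x + projA ip A y) = (x - projA ip A x) + (y - projA ip A y)" by simp
      show "ip (x + y - (projA ip A x + projA ip A y)) m = 0"
        unfolding e ip_add_left using proj_prop(2)[OF B] m by simp
    qed
  qed
  have scl: "projA ip A (sc a x) = sc a (projA ip A x)" for a x
  proof (rule proj_unique[OF B])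
    show "sc a (projA ip A x) \<in> rclos ip A" using rclos_sc[OF B] proj_prop(1)[OF B] by blast
    show "\<forall>m\<in>rclos ip A. ip (sc a x - sc a (projA ip A x)) m = 0"
      using proj_prop(2)[OF B] by (simp add: sc_diff_right[symmetric] ip_sc_left)
  qed
  have bd: "hnorm ip (projA ip A y) \<le> 1 * hnorm ip y" for y
  proof -
    let ?p = "projA ip A y"
    have "ip y ?p = ip (y - ?p) ?p + ip ?p ?p" by (simp add: ip_diff_left)
    also have "ip (y - ?p) ?p = 0" using proj_prop[OF B] by blast
    finally have "(hnorm ip ?p)^2 = Re (ip y ?p)" by (simp add: hnorm_sq)
    also have "\<dots> \<le> hnorm ip y * hnorm ip ?p" using hnorm_cs complex_Re_le_cmod order_trans by blast
    finally have "hnorm ip ?p * hnorm ip ?p \<le> hnorm ip y * hnorm ip ?p" by (simp add: power2_eq_square)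
    thus ?thesis using hnorm_ge0[of ?p] by (cases "hnorm ip ?p = 0") auto
  qed
  show ?thesis unfolding bounded_op_def using add scl bd by blast
qed

lemma sharp_unique:
  assumes P: "positive_op sc ip A"
    and X1: "\<forall>x y. ip (A (X1 x)) y = ip (A x) (T y)" "\<forall>x. X1 x \<in> rclos ip A"
    and X2: "\<forall>x y. ip (A (X2 x)) y = ip (A x) (T y)" "\<forall>x. X2 x \<in> rclos ip A"
  shows "X1 = X2"
proof
  fix x
  have B: "bounded_op sc ip A" using P by (rule pos_bop)
  define d where "d = X1 x - X2 x"
  have dM: "d \<in> rclos ip A" unfolding d_def using rclos_diff[OF B] X1(2) X2(2) by blast
  have Ad: "ip (A d) y = 0" for y unfolding d_def using X1(1) X2(1) by (simp add: bop_diff[OF B] ip_diff_left)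
  have "(hnorm ip d)^2 \<le> e * hnorm ip d" if e: "e > 0" for e
  proof -
    obtain u where u: "hnorm ip (d - A u) < e" using dM e unfolding rclos_def by blast
    have "ip (A u) d = 0" using Ad[of u] pos_herm[OF P, of d u] by simp
    hence "ip d d = ip (d - A u) d" by (simp add: ip_diff_left)
    hence "(hnorm ip d)^2 = Re (ip (d - A u) d)" by (simp add: hnorm_sq)
    also have "\<dots> \<le> hnorm ip (d - A u) * hnorm ip d" using hnorm_cs complex_Re_le_cmod order_trans by blast
    also have "\<dots> \<le> e * hnorm ip d" using u by (simp add: mult_right_mono less_imp_le)
    finally show ?thesis .
  qed
  hence "hnorm ip d = 0"
  proof -
    assume h: "\<And>e. e > 0 \<Longrightarrow> (hnorm ip d)^2 \<le> e * hnorm ip d"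
    show "hnorm ip d = 0"
    proof (rule ccontr)
      assume "hnorm ip d \<noteq> 0"
      hence pos: "hnorm ip d > 0" using hnorm_ge0[of d] by linarith
      have "(hnorm ip d)^2 \<le> (hnorm ip d / 2) * hnorm ip d" using h[of "hnorm ip d / 2"] pos by linarith
      thus False using pos by (simp add: power2_eq_square)
    qed
  qed
  hence "d = 0" by (rule hnorm_eq0)
  thus "X1 x = X2 x" by (simp add: d_def)
qed

lemma sharp_prop:
  assumes P: "positive_op sc ip A" and T: "T \<in> BA sc ip A"
  shows "ip (A (sharpA sc ip A T x)) y = ip (A x) (T y)"
proof -
  have B: "bounded_op sc ip A" using P by (rule pos_bop)
  obtain R where R: "bounded_op sc ip R" "\<forall>x y. ip (A (T x)) y = ip (A x) (R y)"
    using T by (auto simp: BA_def)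
  let ?Q = "\<lambda>X. bounded_op sc ip X \<and> (\<forall>x y. ip (A (X x)) y = ip (A x) (T y)) \<and>
      (\<forall>x. \<forall>e>0. \<exists>u. hnorm ip (X x - A u) < e)"
  have rc: "(\<forall>x. \<forall>e>0. \<exists>u. hnorm ip (X x - A u) < e) \<longleftrightarrow> (\<forall>x. X x \<in> rclos ip A)" for X
    by (simp add: rclos_def)
  define X0 where "X0 = (\<lambda>x. projA ip A (R x))"
  have "?Q X0"
  proof (intro conjI)
    show "bounded_op sc ip X0" unfolding X0_def by (rule bop_comp[OF proj_bop[OF B] R(1)])
    show "\<forall>x. \<forall>e>0. \<exists>u. hnorm ip (X0 x - A u) < e" unfolding rc X0_def using proj_prop(1)[OF B] by blast
    show "\<forall>x y. ip (A (X0 x)) y = ip (A x) (T y)"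
    proof (intro allI)
    fix x y
    have "ip (A (X0 x)) y = ip (X0 x) (A y)" by (rule pos_selfadj[OF P])
    also have "\<dots> = ip (R x) (A y)"
    proof -
      have "ip (R x - X0 x) (A y) = 0" unfolding X0_def using proj_prop(2)[OF B] rclos_A by blast
      thus ?thesis by (simp add: ip_diff_left)
    qed
    also have "\<dots> = ip (A (R x)) y" by (rule pos_selfadj[OF P, symmetric])
    also have "\<dots> = ip (A x) (T y)" by (rule adj_swap[OF P R(2)])
    finally show "ip (A (X0 x)) y = ip (A x) (T y)" .
    qed
  qed
  moreover have "X = X0" if "?Q X" for X
    using sharp_unique[OF P] that \<open>?Q X0\<close> unfolding rc by blast
  ultimately have "\<exists>!X. ?Q X" by (intro ex1I[of _ X0])
  hence "?Q (sharpA sc ip A T)" unfolding sharpA_def by (rule theI')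
  thus ?thesis by blast
qed

end


lemma tq_aux:
  fixes c w q :: real
  assumes h: "\<forall>t>0. t * c \<le> w * (1 + t^2 * q^2)" and w: "0 \<le> w" and q: "0 \<le> q"
  shows "c \<le> 2 * w * q"
proof (cases "q = 0")
  case True
  show ?thesis
  proof (rule ccontr)
    assume "\<not> c \<le> 2 * w * q"
    hence c: "c > 0" using True by simp
    have "(w+1)/c * c \<le> w" using h[rule_format, of "(w+1)/c"] True c w by simp
    thus False using c by simp
  qed
next
  case False
  hence qp: "q > 0" using q by simp
  have "(1/q) * c \<le> w * (1 + (1/q)^2 * q^2)" using h[rule_format, of "1/q"] qp by simp
  also have "\<dots> = 2 * w" using qp by (simp add: power2_eq_square)
  finally have "c / q \<le> 2 * w" by simp
  thus ?thesis using qp by (simp add: pos_divide_le_eq mult.commute mult.left_commute)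
qed

context complex_hilbert begin

lemma exists_unit:
  assumes P: "positive_op sc ip A" and A0: "A \<noteq> (\<lambda>x. 0)"
  shows "\<exists>x. normA ip A x = 1"
proof -
  have B: "bounded_op sc ip A" using P by (rule pos_bop)
  obtain z where z: "A z \<noteq> 0" using A0 by auto
  have "\<exists>x. normA ip A x \<noteq> 0"
  proof (rule ccontr)
    assume "\<not> (\<exists>x. normA ip A x \<noteq> 0)"
    hence "normA ip A z = 0" by simp
    hence "ip (A z) (A z) = 0" using normA_zero_cs[OF P] by blast
    thus False using z ip_definite by blast
  qed
  then obtain x where x: "normA ip A x \<noteq> 0" by blast
  hence xp: "normA ip A x > 0" using normA_ge0[OF P, of x] by linarith
  have "normA ip A (sc (of_real (1 / normA ip A x)) x) = 1"
    using xp by (simp add: normA_sc[OF P] norm_divide)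
  thus ?thesis by blast
qed

lemma opnorm_le:
  assumes P: "positive_op sc ip A" and BT: "bounded_op sc ip T"
    and C: "\<forall>x. normA ip A (T x) \<le> C * normA ip A x"
  shows "normA ip A (T u) \<le> opnormA ip A T * normA ip A u"
proof (cases "normA ip A u = 0")
  case True
  hence "normA ip A (T u) \<le> 0" using C by (metis mult_zero_right)
  thus ?thesis using True by simp
next
  case False
  hence np: "normA ip A u > 0" using normA_ge0[OF P, of u] by linarith
  define v where "v = sc (of_real (1 / normA ip A u)) u"
  have v1: "normA ip A v = 1" using np by (simp add: v_def normA_sc[OF P] norm_divide)
  have Tv: "normA ip A (T v) = normA ip A (T u) / normA ip A u"
    using np by (simp add: v_def bop_sc[OF BT] normA_sc[OF P] norm_divide)
  have bdd: "bdd_above {normA ip A (T x) | x. normA ip A x = 1}"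
  proof (rule bdd_aboveI[of _ C])
    fix y assume "y \<in> {normA ip A (T x) | x. normA ip A x = 1}"
    then obtain x where "y = normA ip A (T x)" "normA ip A x = 1" by blast
    thus "y \<le> C" using C[rule_format, of x] by simp
  qed
  have "normA ip A (T v) \<le> opnormA ip A T"
    unfolding opnormA_def using v1 by (intro cSup_upper[OF _ bdd]) blast
  thus ?thesis using Tv np by (simp add: divide_le_eq)
qed

lemma numrad_le:
  assumes P: "positive_op sc ip A" and BS: "bounded_op sc ip S"
    and C: "\<forall>x. normA ip A x = 1 \<longrightarrow> cmod (ip (A (S x)) x) \<le> C"
  shows "cmod (ip (A (S z)) z) \<le> numradA ip A S * (normA ip A z)^2"
proof (cases "normA ip A z = 0")
  case True
  hence "ip (A (S z)) z = 0" using normA_zero_cs(2)[OF P] by blast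
  thus ?thesis using True by simp
next
  case False
  hence np: "normA ip A z > 0" using normA_ge0[OF P, of z] by linarith
  define r where "r = 1 / normA ip A z"
  define v where "v = sc (of_real r) z"
  have v1: "normA ip A v = 1" using np by (simp add: v_def r_def normA_sc[OF P] norm_divide)
  have Sv: "ip (A (S v)) v = of_real (r^2) * ip (A (S z)) z"
    using pos_bop[OF P] by (simp add: v_def bop_sc[OF BS] bop_sc ip_sc_left ip_sc_right power2_eq_square)
  have bdd: "bdd_above {cmod (ip (A (S x)) x) | x. normA ip A x = 1}"
    using C by (intro bdd_aboveI[of _ C]) auto
  have "cmod (ip (A (S v)) v) \<le> numradA ip A S"
    unfolding numradA_def using v1 by (intro cSup_upper[OF _ bdd]) blast
  hence "r^2 * cmod (ip (A (S z)) z) \<le> numradA ip A S" using Sv by (simp add: norm_mult norm_power)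
  thus ?thesis using np by (simp add: r_def power_divide divide_le_eq mult.commute)
qed

end


context complex_hilbert begin

lemma key_ineq:
  assumes P: "positive_op sc ip A" and BS: "bounded_op sc ip S"
    and om: "\<forall>z. cmod (ip (A (S z)) z) \<le> w * (normA ip A z)^2" and w: "0 \<le> w"
    and x1: "normA ip A x = 1"
  shows "cmod (ip (A (S x)) y + ip (A (S y)) x) \<le> 2 * w * normA ip A y"
    and "cmod (ip (A (S x)) y - ip (A (S y)) x) \<le> 2 * w * normA ip A y"
proof -
  have B: "bounded_op sc ip A" using P by (rule pos_bop)
  have BAS: "bounded_op sc ip (\<lambda>x. A (S x))" by (rule bop_comp[OF B BS])
  define a where "a = ip (A (S x)) y"
  define b where "b = ip (A (S y)) x"
  define q where "q = normA ip A y"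
  have q0: "0 \<le> q" using P by (simp add: q_def)
  have gen: "cmod (cnj z * a + z * b) \<le> w * (1 + (cmod z)^2 * q^2)" for z
  proof -
    define E where "E z = ip (A (S (x + sc z y))) (x + sc z y)" for z
    have dif: "E z - E (-z) = 2 * (cnj z * a + z * b)"
      unfolding E_def expand[OF BAS] a_def b_def by (simp add: algebra_simps)
    have zz: "z * cnj z = of_real ((cmod z)^2)" by (rule complex_norm_square[symmetric])
    have sum: "ip (A (x + sc z y)) (x + sc z y) + ip (A (x + sc (-z) y)) (x + sc (-z) y)
        = 2 * ip (A x) x + 2 * (z * cnj z) * ip (A y) y"
      unfolding expand[OF B] by (simp add: algebra_simps)
    have "(normA ip A (x + sc z y))^2 + (normA ip A (x + sc (-z) y))^2
        = Re (2 * ip (A x) x + 2 * (z * cnj z) * ip (A y) y)"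
      unfolding normA_sq[OF P] sum[symmetric] by simp
    also have "\<dots> = 2 + 2 * (cmod z)^2 * q^2"
      unfolding zz using normA_sq[OF P, of x] normA_sq[OF P, of y] x1 by (simp add: q_def)
    finally have ps: "(normA ip A (x + sc z y))^2 + (normA ip A (x + sc (-z) y))^2 = 2 + 2 * (cmod z)^2 * q^2" .
    have "2 * cmod (cnj z * a + z * b) = cmod (E z - E (-z))" unfolding dif by (simp only: norm_mult) simp
    also have "\<dots> \<le> cmod (E z) + cmod (E (-z))" by (rule norm_triangle_ineq4)
    also have "\<dots> \<le> w * (normA ip A (x + sc z y))^2 + w * (normA ip A (x + sc (-z) y))^2"
      unfolding E_def using om by (intro add_mono) auto
    also have "\<dots> = w * (2 + 2 * (cmod z)^2 * q^2)" using ps by (metis distrib_left)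
    finally show ?thesis by (simp add: algebra_simps)
  qed
  have "\<forall>t>0. t * cmod (a + b) \<le> w * (1 + t^2 * q^2)"
  proof (intro allI impI)
    fix t :: real assume t: "t > 0"
    have "cmod (cnj (of_real t) * a + of_real t * b) = t * cmod (a + b)"
      using t by (simp add: distrib_left[symmetric] norm_mult)
    thus "t * cmod (a + b) \<le> w * (1 + t^2 * q^2)" using gen[of "of_real t"] t by simp
  qed
  thus "cmod (ip (A (S x)) y + ip (A (S y)) x) \<le> 2 * w * normA ip A y"
    using tq_aux w q0 by (simp add: a_def b_def q_def)
  have "\<forall>t>0. t * cmod (a - b) \<le> w * (1 + t^2 * q^2)"
  proof (intro allI impI)
    fix t :: real assume t: "t > 0"
    have "cnj (\<i> * of_real t) * a + (\<i> * of_real t) * b = - (\<i> * of_real t) * (a - b)"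
      by (simp add: algebra_simps)
    hence "cmod (cnj (\<i> * of_real t) * a + (\<i> * of_real t) * b) = t * cmod (a - b)"
      using t by (simp add: norm_mult)
    moreover have "cmod (\<i> * of_real t) = t" using t by (simp add: norm_mult)
    ultimately show "t * cmod (a - b) \<le> w * (1 + t^2 * q^2)" using gen[of "\<i> * of_real t"] by simp
  qed
  thus "cmod (ip (A (S x)) y - ip (A (S y)) x) \<le> 2 * w * normA ip A y"
    using tq_aux w q0 by (simp add: a_def b_def q_def)
qed

end


lemma numrad_upper:
  assumes C: "\<forall>x. normA ip A x = 1 \<longrightarrow> cmod (ip (A (W x)) x) \<le> C" and x: "normA ip A x = 1"
  shows "cmod (ip (A (W x)) x) \<le> numradA ip A W"
proof -
  have bdd: "bdd_above {cmod (ip (A (W x)) x) | x. normA ip A x = 1}"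
  proof (rule bdd_aboveI[of _ C])
    fix y assume "y \<in> {cmod (ip (A (W x)) x) | x. normA ip A x = 1}"
    then obtain x where "y = cmod (ip (A (W x)) x)" "normA ip A x = 1" by blast
    thus "y \<le> C" using C by simp
  qed
  show ?thesis unfolding numradA_def using x by (intro cSup_upper[OF _ bdd]) blast
qed

lemma numrad_least:
  assumes ex: "\<exists>x. normA ip A x = 1" and K: "\<forall>x. normA ip A x = 1 \<longrightarrow> cmod (ip (A (W x)) x) \<le> K"
  shows "numradA ip A W \<le> K"
  unfolding numradA_def
proof (rule cSup_least)
  show "{cmod (ip (A (W x)) x) | x. normA ip A x = 1} \<noteq> {}" using ex by blast
  fix y assume "y \<in> {cmod (ip (A (W x)) x) | x. normA ip A x = 1}"
  then obtain x where "y = cmod (ip (A (W x)) x)" "normA ip A x = 1" by blast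
  thus "y \<le> K" using K by simp
qed

theorem theorem2p2:
  fixes sc :: "complex \<Rightarrow> 'a::ab_group_add \<Rightarrow> 'a"
    and ip :: "'a \<Rightarrow> 'a \<Rightarrow> complex"
    and A T S :: "'a \<Rightarrow> 'a"
  assumes "complex_hilbert sc ip"
    and "positive_op sc ip A"
    and "A \<noteq> (\<lambda>x. 0)"
    and "T \<in> BA sc ip A"
    and "S \<in> BA sc ip A"
  shows "numradA ip A (T \<circ> S) \<le> opnormA ip A T * numradA ip A S
           + 1/2 * numradA ip A (\<lambda>x. T (S x) + S (sharpA sc ip A T x))
       \<and> numradA ip A (T \<circ> S) \<le> opnormA ip A T * numradA ip A S
           + 1/2 * numradA ip A (\<lambda>x. T (S x) - S (sharpA sc ip A T x))"
proof -
  interpret complex_hilbert sc ip by (rule assms(1))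
  have P: "positive_op sc ip A" by (rule assms(2))
  have B: "bounded_op sc ip A" using P by (rule pos_bop)
  have BT: "bounded_op sc ip T" using assms(4) by (simp add: BA_def)
  have BS: "bounded_op sc ip S" using assms(5) by (simp add: BA_def)
  obtain CT where CT: "\<forall>x. normA ip A (T x) \<le> CT * normA ip A x" using BA_Abound[OF P assms(4)] by blast
  obtain CS where CS: "CS \<ge> 0" "\<forall>x. normA ip A (S x) \<le> CS * normA ip A x" using BA_Abound[OF P assms(5)] by blast
  define X where "X = sharpA sc ip A T"
  have Xp: "ip (A (X x)) y = ip (A x) (T y)" for x y unfolding X_def by (rule sharp_prop[OF P assms(4)])
  obtain x0 where x0: "normA ip A x0 = 1" using exists_unit[OF P assms(3)] by blast
  have ex: "\<exists>x. normA ip A x = 1" using x0 by blast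
  define nT where "nT = opnormA ip A T"
  have opT: "normA ip A (T u) \<le> nT * normA ip A u" for u unfolding nT_def by (rule opnorm_le[OF P BT CT])
  have nT0: "0 \<le> nT" using opT[of x0] normA_ge0[OF P, of "T x0"] x0 by simp
  have Xb: "normA ip A (X x) \<le> nT" if x1: "normA ip A x = 1" for x
  proof -
    let ?n = "normA ip A (X x)"
    have "?n * ?n = Re (ip (A (X x)) (X x))" using normA_sq[OF P] by (simp add: power2_eq_square)
    also have "\<dots> = Re (ip (A x) (T (X x)))" by (simp add: Xp)
    also have "\<dots> \<le> cmod (ip (A x) (T (X x)))" by (rule complex_Re_le_cmod)
    also have "\<dots> \<le> normA ip A x * normA ip A (T (X x))" by (rule normA_cs[OF P])
    also have "\<dots> \<le> nT * ?n" using opT[of "X x"] x1 by simp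
    finally have h: "?n * ?n \<le> nT * ?n" .
    show ?thesis
    proof (cases "?n = 0")
      case True thus ?thesis using nT0 by simp
    next
      case False
      hence "?n > 0" using normA_ge0[OF P, of "X x"] by linarith
      thus ?thesis using h by simp
    qed
  qed
  have Sbdd: "\<forall>x. normA ip A x = 1 \<longrightarrow> cmod (ip (A (S x)) x) \<le> CS"
  proof (intro allI impI)
    fix x assume x1: "normA ip A x = 1"
    have "cmod (ip (A (S x)) x) \<le> normA ip A (S x) * normA ip A x" by (rule normA_cs[OF P])
    also have "\<dots> \<le> CS" using CS(2)[rule_format, of x] x1 by simp
    finally show "cmod (ip (A (S x)) x) \<le> CS" .
  qed
  define w where "w = numradA ip A S"
  have om: "\<forall>z. cmod (ip (A (S z)) z) \<le> w * (normA ip A z)^2"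
    unfolding w_def using numrad_le[OF P BS Sbdd] by blast
  have w0: "0 \<le> w" using om x0 by (metis norm_ge_zero mult.right_neutral one_power2 order_trans)
  have pt: "cmod (ip (A (T (S x))) x) \<le> nT * w + 1/2 * cmod (ip (A (T (S x) + S (X x))) x)
     \<and> cmod (ip (A (T (S x))) x) \<le> nT * w + 1/2 * cmod (ip (A (T (S x) - S (X x))) x)
     \<and> cmod (ip (A (T (S x) + S (X x))) x) \<le> 2 * (CS * nT)
     \<and> cmod (ip (A (T (S x) - S (X x))) x) \<le> 2 * (CS * nT)"
    if x1: "normA ip A x = 1" for x
  proof -
    define a where "a = ip (A (T (S x))) x"
    define b where "b = ip (A (S (X x))) x"
    have aeq: "a = ip (A (S x)) (X x)"
      unfolding a_def using pos_herm[OF P, of "X x" "S x"] pos_herm[OF P, of x "T (S x)"] Xp[of x "S x"]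
      by simp
    have Wp: "ip (A (T (S x) + S (X x))) x = a + b"
      unfolding a_def b_def by (simp add: bop_add[OF B] ip_add_left)
    have Wm: "ip (A (T (S x) - S (X x))) x = a - b"
      unfolding a_def b_def by (simp add: bop_diff[OF B] ip_diff_left)
    have k1: "cmod (a + b) \<le> 2 * w * nT"
      using key_ineq(1)[OF P BS om w0 x1, of "X x"] Xb[OF x1] w0 aeq b_def
      by (metis mult_left_mono order_trans mult_nonneg_nonneg zero_le_numeral)
    have k2: "cmod (a - b) \<le> 2 * w * nT"
      using key_ineq(2)[OF P BS om w0 x1, of "X x"] Xb[OF x1] w0 aeq b_def
      by (metis mult_left_mono order_trans mult_nonneg_nonneg zero_le_numeral)
    have "2 * cmod a = cmod ((a + b) + (a - b))" by (simp add: norm_mult[symmetric])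
    also have "\<dots> \<le> cmod (a + b) + cmod (a - b)" by (rule norm_triangle_ineq)
    finally have twoa: "2 * cmod a \<le> cmod (a + b) + cmod (a - b)" .
    have ca: "cmod a \<le> CS * nT"
    proof -
      have "cmod a \<le> normA ip A (S x) * normA ip A (X x)" unfolding aeq by (rule normA_cs[OF P])
      also have "\<dots> \<le> CS * nT" using CS(2)[rule_format, of x] CS(1) x1 Xb[OF x1] normA_ge0[OF P] by (intro mult_mono) auto
      finally show ?thesis .
    qed
    have cb: "cmod b \<le> CS * nT"
    proof -
      have "cmod b \<le> normA ip A (S (X x)) * normA ip A x" unfolding b_def by (rule normA_cs[OF P])
      also have "\<dots> \<le> CS * normA ip A (X x)" using CS(2)[rule_format, of "X x"] x1 by simp
      also have "\<dots> \<le> CS * nT" using CS Xb[OF x1] by (simp add: mult_left_mono)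
      finally show ?thesis .
    qed
    have "cmod (a + b) \<le> 2 * (CS * nT)" using ca cb norm_triangle_ineq[of a b] by simp
    moreover have "cmod (a - b) \<le> 2 * (CS * nT)" using ca cb norm_triangle_ineq4[of a b] by simp
    ultimately show ?thesis unfolding Wp Wm a_def[symmetric] using twoa k1 k2 by (simp add: algebra_simps)
  qed
  have bp: "\<forall>x. normA ip A x = 1 \<longrightarrow> cmod (ip (A (T (S x) + S (X x))) x) \<le> 2 * (CS * nT)"
    using pt by blast
  have bm: "\<forall>x. normA ip A x = 1 \<longrightarrow> cmod (ip (A (T (S x) - S (X x))) x) \<le> 2 * (CS * nT)"
    using pt by blast
  have up: "cmod (ip (A (T (S x) + S (X x))) x) \<le> numradA ip A (\<lambda>x. T (S x) + S (X x))"
    if "normA ip A x = 1" for x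
    using numrad_upper[of ip A "\<lambda>x. T (S x) + S (X x)", OF bp that] by simp
  have um: "cmod (ip (A (T (S x) - S (X x))) x) \<le> numradA ip A (\<lambda>x. T (S x) - S (X x))"
    if "normA ip A x = 1" for x
    using numrad_upper[of ip A "\<lambda>x. T (S x) - S (X x)", OF bm that] by simp
  have r1: "numradA ip A (T \<circ> S) \<le> nT * w + 1/2 * numradA ip A (\<lambda>x. T (S x) + S (X x))"
  proof (rule numrad_least[OF ex], intro allI impI)
    fix x assume x1: "normA ip A x = 1"
    show "cmod (ip (A ((T \<circ> S) x)) x) \<le> nT * w + 1/2 * numradA ip A (\<lambda>x. T (S x) + S (X x))"
      using pt[OF x1] up[OF x1] by simp
  qed
  have r2: "numradA ip A (T \<circ> S) \<le> nT * w + 1/2 * numradA ip A (\<lambda>x. T (S x) - S (X x))"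
  proof (rule numrad_least[OF ex], intro allI impI)
    fix x assume x1: "normA ip A x = 1"
    show "cmod (ip (A ((T \<circ> S) x)) x) \<le> nT * w + 1/2 * numradA ip A (\<lambda>x. T (S x) - S (X x))"
      using pt[OF x1] um[OF x1] by simp
  qed
  show ?thesis using r1 r2 unfolding nT_def w_def X_def by simp
qed


end
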